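(* Let $a,b$ be distinct assertion variables. The implication $$(-*a*b)\wedge(a*a)\ \Rightarrow\ (-*a*a)\vee(-*-*b)$$ holds in the unary interpretation (for every $\eta$ and every $\rho:\mathsf{AVar}\to\mathsf{IRel}_1$), but fails in the binary interpretation: with $\rho(a)=\{([1],[])\}^\uparrow\cup\{([2],[2])\}^\uparrow$ and $\rho(b)=\mathsf{Heap}^2$, the pair $([1,2],[2])$ belongs to the binary meaning of the left side but not to that of the right side.
   Context: $\mathsf{Heap}$: finite partial functions $\mathsf{PosInt}\to\mathsf{Int}$; $[]$ the empty heap; $[m]$ the heap storing $0$ at location $m$ and nothing else, and $[m_1,m_2]=[m_1]\cdot[m_2]$ for distinct $m_1,m_2$; $g\sqsubseteq h$ means $h$ extends $g$; $h\cdot g$ union of disjoint heaps; componentwise on $\mathsf{Heap}^n$; $S^\uparrow$ is the upward closure of a set $S$ of tuples. $\mathsf{IRel}_n$: upward closed subsets of $\mathsf{Heap}^n$; $p*q=\{\mathbf f\cdot\mathbf g\mid\mathbf f\in p,\mathbf g\in q,\text{componentwise disjoint}\}$; $\Delta_n(X)=\{(h_1,\dots,h_n)\mid\exists f\in X.\ \forall k.\ f\sqsubseteq h_k\}$ for $X\subseteq\mathsf{Heap}$. Assertion semantics with $\eta$ and $\rho:\mathsf{AVar}\to\mathsf{IRel}_n$: primitive assertions mean $\Delta_n$ of their standard set of heaps, variables $a$ mean $\rho(a)$, $\wedge,\vee,*$ mean $\cap,\cup,*$, $\exists$ means union over integer values. The assertion $-$ abbreviates $\exists x,y.\,x\hookrightarrow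 y$, whose standard set of heaps is the set of heaps with non-empty domain. Binary: $n=2$; unary: $n=1$. *)

theory Defs
  imports Main
begin

text \<open>A heap is a finite partial function from positive integers (locations)
to integers. We represent it as a map nat to int with finite domain not
containing 0.\<close>

type_synonym heap = "nat \<Rightarrow> int option"

definition Heaps :: "heap set" where
  "Heaps = {h. finite (dom h) \<and> 0 \<notin> dom h}"

text \<open>[m]: the heap storing 0 at location m and nothing else.\<close>
definition single :: "nat \<Rightarrow> heap" where
  "single m = [m \<mapsto> 0]"

text \<open>[m1,m2] = [m1] . [m2]\<close>
definition double :: "nat \<Rightarrow> nat \<Rightarrow> heap" where
  "double m1 m2 = single m1 ++ single m2"

definition tuples :: "nat \<Rightarrow> heap list set" where
  "tuples n = {hs. length hs = n \<and> set hs \<subseteq> Heaps}"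

definition tle :: "heap list \<Rightarrow> heap list \<Rightarrow> bool" where
  "tle fs gs \<longleftrightarrow> length fs = length gs \<and> (\<forall>k < length fs. fs ! k \<subseteq>\<^sub>m gs ! k)"

definition upclose :: "nat \<Rightarrow> heap list set \<Rightarrow> heap list set" where
  "upclose n S = {gs \<in> tuples n. \<exists>fs \<in> S. tle fs gs}"

definition IRel :: "nat \<Rightarrow> heap list set set" where
  "IRel n = {p. p \<subseteq> tuples n \<and> (\<forall>fs \<in> p. \<forall>gs \<in> tuples n. tle fs gs \<longrightarrow> gs \<in> p)}"

definition tdisj :: "heap list \<Rightarrow> heap list \<Rightarrow> bool" where
  "tdisj fs gs \<longleftrightarrow> length fs = length gs \<and>
     (\<forall>k < length fs. dom (fs ! k) \<inter> dom (gs ! k) = {})"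

definition tunion :: "heap list \<Rightarrow> heap list \<Rightarrow> heap list" where
  "tunion fs gs = map2 (++) fs gs"

definition sstar :: "heap list set \<Rightarrow> heap list set \<Rightarrow> heap list set" where
  "sstar p q = {tunion fs gs | fs gs. fs \<in> p \<and> gs \<in> q \<and> tdisj fs gs}"

definition Delta :: "nat \<Rightarrow> heap set \<Rightarrow> heap list set" where
  "Delta n X = {hs \<in> tuples n. \<exists>f \<in> X. \<forall>k < n. f \<subseteq>\<^sub>m hs ! k}"

text \<open>Integer (expression) variables are of type 'x, assertion variables of type 'a.\<close>
datatype ('x, 'a) assn =
    PointsTo 'x 'x
  | AVar 'a
  | Conj "('x, 'a) assn" "('x, 'a) assn"
  | Disj "('x, 'a) assn" "('x, 'a) assn"
  | Star "('x, 'a) assn" "('x, 'a) assn"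
  | Exists 'x "('x, 'a) assn"

definition pto_heaps :: "int \<Rightarrow> int \<Rightarrow> heap set" where
  "pto_heaps l v = {h \<in> Heaps. l > 0 \<and> h (nat l) = Some v}"

fun sem :: "nat \<Rightarrow> ('x \<Rightarrow> int) \<Rightarrow> ('a \<Rightarrow> heap list set) \<Rightarrow> ('x, 'a) assn \<Rightarrow> heap list set" where
  "sem n \<eta> \<rho> (PointsTo x y) = Delta n (pto_heaps (\<eta> x) (\<eta> y))"
| "sem n \<eta> \<rho> (AVar a) = \<rho> a"
| "sem n \<eta> \<rho> (Conj A B) = sem n \<eta> \<rho> A \<inter> sem n \<eta> \<rho> B"
| "sem n \<eta> \<rho> (Disj A B) = sem n \<eta> \<rho> A \<union> sem n \<eta> \<rho> B"
| "sem n \<eta> \<rho> (Star A B) = sstar (sem n \<eta> \<rho> A) (sem n \<eta> \<rho> B)"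
| "sem n \<eta> \<rho> (Exists x A) = (\<Union>v::int. sem n (\<eta>(x := v)) \<rho> A)"

text \<open>The assertion "-" abbreviates EX x y. x \<hookrightarrow> y; we use the integer variables 0 and 1.\<close>
definition Dash :: "(nat, 'a) assn" where
  "Dash = Exists 0 (Exists 1 (PointsTo 0 1))"

definition lhs17 :: "'a \<Rightarrow> 'a \<Rightarrow> (nat, 'a) assn" where
  "lhs17 a b = Conj (Star (Star Dash (AVar a)) (AVar b)) (Star (AVar a) (AVar a))"

definition rhs17 :: "'a \<Rightarrow> 'a \<Rightarrow> (nat, 'a) assn" where
  "rhs17 a b = Disj (Star (Star Dash (AVar a)) (AVar a)) (Star (Star Dash Dash) (AVar b))"

end

theory Submission imports Defs begin
lemma tle_2: "tle [u,v] [x,y] \<longleftrightarrow> u \<subseteq>\<^sub>m x \<and> v \<subseteq>\<^sub>m y"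
  unfolding tle_def by (auto simp: less_Suc_eq numeral_2_eq_2)
lemma tdisj_2: "tdisj [u,v] [x,y] \<longleftrightarrow> dom u \<inter> dom x = {} \<and> dom v \<inter> dom y = {}"
  unfolding tdisj_def by (simp add: less_Suc_eq numeral_2_eq_2 all_conj_distrib)
lemma tunion_2: "tunion [u,v] [x,y] = [u++x, v++y]"
  by (simp add: tunion_def)
lemma tle_1: "tle [u] [x] \<longleftrightarrow> u \<subseteq>\<^sub>m x"
  by (auto simp: tle_def)
lemma tdisj_1: "tdisj [u] [x] \<longleftrightarrow> dom u \<inter> dom x = {}"
  by (auto simp: tdisj_def)
lemma tunion_1: "tunion [u] [x] = [u++x]"
  by (simp add: tunion_def)
lemma tuples_2: "hs \<in> tuples 2 \<Longrightarrow> \<exists>x y. hs = [x,y] \<and> x \<in> Heaps \<and> y \<in> Heaps"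
  unfolding tuples_def
  by (cases hs; cases "tl hs"; auto simp: numeral_2_eq_2)
lemma tuples_1: "hs \<in> tuples 1 \<Longrightarrow> \<exists>x. hs = [x] \<and> x \<in> Heaps"
  unfolding tuples_def
  by (cases hs; auto)

lemma sem_Dash: "sem n \<eta> \<rho> Dash = {hs \<in> tuples n. \<exists>f\<in>Heaps. dom f \<noteq> {} \<and> (\<forall>k<n. f \<subseteq>\<^sub>m hs!k)}"
proof (rule set_eqI, rule iffI)
  fix hs assume "hs \<in> sem n \<eta> \<rho> Dash"
  then show "hs \<in> {hs \<in> tuples n. \<exists>f\<in>Heaps. dom f \<noteq> {} \<and> (\<forall>k<n. f \<subseteq>\<^sub>m hs!k)}"
    apply (auto simp: Dash_def Delta_def pto_heaps_def)
    by (metis option.distinct(1))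
next
  fix hs assume "hs \<in> {hs \<in> tuples n. \<exists>f\<in>Heaps. dom f \<noteq> {} \<and> (\<forall>k<n. f \<subseteq>\<^sub>m hs!k)}"
  then obtain f where hs: "hs \<in> tuples n" and f: "f \<in> Heaps" "dom f \<noteq> {}" "\<forall>k<n. f \<subseteq>\<^sub>m hs!k" by auto
  from f(2) obtain l where "l \<in> dom f" by blast
  then obtain w where lw: "f l = Some w" by auto
  have "l \<noteq> 0" using f(1) lw unfolding Heaps_def by auto
  then have "f \<in> pto_heaps (int l) w" using f(1) lw by (auto simp: pto_heaps_def)
  then have "hs \<in> Delta n (pto_heaps (int l) w)" using hs f by (auto simp: Delta_def)
  then show "hs \<in> sem n \<eta> \<rho> Dash" by (auto simp: Dash_def)
qed

lemma tle_trans: "tle fs gs \<Longrightarrow> tle gs hs \<Longrightarrow> tle fs hs"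
  unfolding tle_def using map_le_trans by fastforce

lemma upclose_IRel: "upclose n S \<in> IRel n"
  unfolding IRel_def upclose_def using tle_trans by blast

lemma tuples_IRel: "tuples n \<in> IRel n"
  unfolding IRel_def by blast

lemma IRel_Un: "p \<in> IRel n \<Longrightarrow> q \<in> IRel n \<Longrightarrow> p \<union> q \<in> IRel n"
  unfolding IRel_def by blast

lemma dom_single[simp]: "dom (single m) = {m}"
  by (simp add: single_def)

lemma single_Heaps: "m \<noteq> 0 \<Longrightarrow> single m \<in> Heaps"
  by (simp add: Heaps_def)

lemma empty_Heaps: "Map.empty \<in> Heaps"
  by (simp add: Heaps_def)

lemma unary:
  assumes R: "\<forall>c. \<rho> c \<in> IRel 1"
  shows "sem 1 \<eta> \<rho> (lhs17 a b) \<subseteq> sem 1 \<eta> \<rho> (rhs17 a b)"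
proof
  fix hs assume "hs \<in> sem 1 \<eta> \<rho> (lhs17 a b)"
  then have "hs \<in> sstar (sstar (sem 1 \<eta> \<rho> Dash) (\<rho> a)) (\<rho> b)"
    by (simp add: lhs17_def)
  then obtain xs ys where hs: "hs = tunion xs ys" and xs: "xs \<in> sstar (sem 1 \<eta> \<rho> Dash) (\<rho> a)"
    and ys: "ys \<in> \<rho> b" and dj: "tdisj xs ys" unfolding sstar_def by blast
  from xs obtain ds as where xs': "xs = tunion ds as" and ds: "ds \<in> sem 1 \<eta> \<rho> Dash"
    and as: "as \<in> \<rho> a" and dj2: "tdisj ds as" unfolding sstar_def by blast
  have Rt: "\<rho> c \<subseteq> tuples 1" for c using R unfolding IRel_def by blast
  obtain a1 where a1: "as = [a1]" "a1 \<in> Heaps" using tuples_1 as Rt by blast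
  obtain y1 where y1: "ys = [y1]" "y1 \<in> Heaps" using tuples_1 ys Rt by blast
  show "hs \<in> sem 1 \<eta> \<rho> (rhs17 a b)"
  proof (cases "dom a1 = {}")
    case True
    then have "a1 = Map.empty" by auto
    then have "tle as ys" using a1 y1 by (simp add: tle_1)
    then have "ys \<in> \<rho> a" using R as ys Rt unfolding IRel_def by blast
    then have "hs \<in> sstar (sstar (sem 1 \<eta> \<rho> Dash) (\<rho> a)) (\<rho> a)"
      using hs xs dj unfolding sstar_def by blast
    then show ?thesis by (simp add: rhs17_def)
  next
    case False
    have "as \<in> sem 1 \<eta> \<rho> Dash" unfolding sem_Dash using a1 False as Rt by auto
    then have "xs \<in> sstar (sem 1 \<eta> \<rho> Dash) (sem 1 \<eta> \<rho> Dash)"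
      using xs' ds dj2 unfolding sstar_def by blast
    then have "hs \<in> sstar (sstar (sem 1 \<eta> \<rho> Dash) (sem 1 \<eta> \<rho> Dash)) (\<rho> b)"
      using hs ys dj unfolding sstar_def by blast
    then show ?thesis by (simp add: rhs17_def)
  qed
qed


lemma sstarI: "fs \<in> p \<Longrightarrow> gs \<in> q \<Longrightarrow> tdisj fs gs \<Longrightarrow> tunion fs gs \<in> sstar p q"
  unfolding sstar_def by blast

lemma double_eq: "double 1 2 = single 2 ++ single 1"
  unfolding double_def by (rule map_add_comm) simp

lemma binary:
  assumes ra: "\<rho> a = upclose 2 {[single 1, Map.empty]} \<union> upclose 2 {[single 2, single 2]}"
    and rb: "\<rho> b = tuples 2"
  shows "[double 1 2, single 2] \<in> sem 2 \<eta> \<rho> (lhs17 a b)"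
    and "[double 1 2, single 2] \<notin> sem 2 \<eta> \<rho> (rhs17 a b)"
proof -
  have T1: "[single 1, Map.empty] \<in> tuples 2" and T2: "[single 2, single 2] \<in> tuples 2"
    and T3: "[Map.empty, Map.empty] \<in> tuples 2"
    by (auto simp: tuples_def single_Heaps empty_Heaps)
  have A1: "[single 1, Map.empty] \<in> \<rho> a" unfolding ra upclose_def using T1
    by (auto simp: tle_2)
  have A2: "[single 2, single 2] \<in> \<rho> a" unfolding ra upclose_def using T2
    by (auto simp: tle_2)
  have B: "[Map.empty, Map.empty] \<in> \<rho> b" using rb T3 by simp
  have D: "[single 2, single 2] \<in> sem 2 \<eta> \<rho> Dash" unfolding sem_Dash
  proof (intro CollectI conjI bexI[of _ "single 2"])
    show "[single 2, single 2] \<in> tuples 2" by (rule T2)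
    show "single 2 \<in> Heaps" by (simp add: single_Heaps)
    show "dom (single 2) \<noteq> {}" by simp
    show "\<forall>k<2. single 2 \<subseteq>\<^sub>m [single 2, single 2] ! k"
      by (simp add: less_Suc_eq numeral_2_eq_2 all_conj_distrib)
  qed
  have "tunion [single 2, single 2] [single 1, Map.empty] \<in> sstar (sem 2 \<eta> \<rho> Dash) (\<rho> a)"
    using D A1 by (intro sstarI) (auto simp: tdisj_2)
  note X = this
  have "tunion (tunion [single 2, single 2] [single 1, Map.empty]) [Map.empty, Map.empty]
     \<in> sstar (sstar (sem 2 \<eta> \<rho> Dash) (\<rho> a)) (\<rho> b)"
    by (rule sstarI[OF X B]) (simp add: tdisj_2 tunion_2)
  moreover have "tunion [single 1, Map.empty] [single 2, single 2] \<in> sstar (\<rho> a) (\<rho> a)"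
    using A1 A2 by (intro sstarI) (auto simp: tdisj_2)
  ultimately show "[double 1 2, single 2] \<in> sem 2 \<eta> \<rho> (lhs17 a b)"
    using double_eq by (simp add: lhs17_def tunion_2 double_def)
next
  have Rt: "\<rho> a \<subseteq> tuples 2" unfolding ra upclose_def by blast
  have ra2: "(single 1 \<subseteq>\<^sub>m x) \<or> (2 \<in> dom y)" if xy: "[x, y] \<in> \<rho> a" for x y
  proof -
    from xy have "tle [single 1, Map.empty] [x,y] \<or> tle [single 2, single 2] [x,y]"
      unfolding ra upclose_def by blast
    then have "single 1 \<subseteq>\<^sub>m x \<or> single 2 \<subseteq>\<^sub>m y" by (auto simp: tle_2)
    then show ?thesis using map_le_implies_dom_le[of "single 2" y] by auto
  qed
  have DD: "hs \<in> sem 2 \<eta> \<rho> Dash \<Longrightarrow> \<exists>x y. hs = [x, y] \<and> dom y \<noteq> {}" for hs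
    unfolding sem_Dash
    apply clarify
    apply (drule tuples_2)
    apply clarify
    apply (drule spec[of _ 1])
    apply (simp add: map_le_def)
    by blast
  have s1: "1 \<in> dom (single 1)" by simp
  show "[double 1 2, single 2] \<notin> sem 2 \<eta> \<rho> (rhs17 a b)"
  proof
    assume "[double 1 2, single 2] \<in> sem 2 \<eta> \<rho> (rhs17 a b)"
    then consider
      (L) "[double 1 2, single 2] \<in> sstar (sstar (sem 2 \<eta> \<rho> Dash) (\<rho> a)) (\<rho> a)"
    | (R) "[double 1 2, single 2] \<in> sstar (sstar (sem 2 \<eta> \<rho> Dash) (sem 2 \<eta> \<rho> Dash)) (\<rho> b)"
      by (auto simp: rhs17_def)
    then show False
    proof cases
      case L
      then obtain xs bs ds as where e: "[double 1 2, single 2] = tunion (tunion ds as) bs"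
        and ds: "ds \<in> sem 2 \<eta> \<rho> Dash" and as: "as \<in> \<rho> a" and bs: "bs \<in> \<rho> a"
        and dj1: "tdisj ds as" and dj2: "tdisj (tunion ds as) bs"
        unfolding sstar_def by blast
      obtain d1 d2 where d: "ds = [d1, d2]" "dom d2 \<noteq> {}" using DD ds by blast
      obtain a1 a2 where a: "as = [a1, a2]" using tuples_2 as Rt by blast
      obtain b1 b2 where b: "bs = [b1, b2]" using tuples_2 bs Rt by blast
      have e2: "single 2 = (d2 ++ a2) ++ b2" and e1: "double 1 2 = (d1 ++ a1) ++ b1"
        using e by (simp_all add: d a b tunion_2)
      have dd: "dom d2 \<union> dom a2 \<union> dom b2 = {2}"
        using arg_cong[OF e2, of dom] by (simp add: Un_ac)
      have dj: "dom d2 \<inter> dom a2 = {}" "dom (d2 ++ a2) \<inter> dom b2 = {}"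
        "dom (d1 ++ a1) \<inter> dom b1 = {}"
        using dj1 dj2 by (simp_all add: d a b tdisj_2 tunion_2)
      have "dom d2 \<subseteq> {2}" using dd by blast
      then have "2 \<in> dom d2" using d(2) by (auto simp: subset_singleton_iff)
      then have n1: "2 \<notin> dom a2" "2 \<notin> dom b2" using dj(1,2) by (blast, simp add: disjoint_iff)
      have "[a1,a2] \<in> \<rho> a" "[b1,b2] \<in> \<rho> a" using as bs a b by simp_all
      then have "single 1 \<subseteq>\<^sub>m a1" "single 1 \<subseteq>\<^sub>m b1"
        using ra2 n1 by blast+
      then have "1 \<in> dom a1" "1 \<in> dom b1" using s1 map_le_implies_dom_le by blast+
      then show False using dj(3) by auto
    next
      case R
      then obtain bs ds es where e: "[double 1 2, single 2] = tunion (tunion ds es) bs"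
        and ds: "ds \<in> sem 2 \<eta> \<rho> Dash" and es: "es \<in> sem 2 \<eta> \<rho> Dash" and bs: "bs \<in> \<rho> b"
        and dj1: "tdisj ds es" and dj2: "tdisj (tunion ds es) bs"
        unfolding sstar_def by blast
      obtain d1 d2 where d: "ds = [d1, d2]" "dom d2 \<noteq> {}" using DD ds by blast
      obtain a1 a2 where a: "es = [a1, a2]" "dom a2 \<noteq> {}" using DD es by blast
      obtain b1 b2 where b: "bs = [b1, b2]" using tuples_2 bs rb by blast
      have e2: "single 2 = (d2 ++ a2) ++ b2"
        using e by (simp_all add: d a b tunion_2)
      have dd: "dom d2 \<union> dom a2 \<union> dom b2 = {2}"
        using arg_cong[OF e2, of dom] by (simp add: Un_ac)
      have dj: "dom d2 \<inter> dom a2 = {}"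
        using dj1 by (simp_all add: d a b tdisj_2 tunion_2)
      have "dom d2 \<subseteq> {2}" "dom a2 \<subseteq> {2}" using dd by blast+
      then have "dom d2 = {2}" "dom a2 = {2}" using d(2) a(2) by (auto simp: subset_singleton_iff)
      then show False using dj by simp
    qed
  qed
qed

theorem mainTheorem17:
  fixes a b :: 'a
  assumes "a \<noteq> b"
  shows "(\<forall>(\<eta> :: nat \<Rightarrow> int) (\<rho> :: 'a \<Rightarrow> heap list set).
            (\<forall>c. \<rho> c \<in> IRel 1) \<longrightarrow> sem 1 \<eta> \<rho> (lhs17 a b) \<subseteq> sem 1 \<eta> \<rho> (rhs17 a b))
     \<and> (\<forall>(\<eta> :: nat \<Rightarrow> int) (\<rho> :: 'a \<Rightarrow> heap list set).
            \<rho> a = upclose 2 {[single 1, Map.empty]} \<union> upclose 2 {[single 2, single 2]}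
            \<longrightarrow> \<rho> b = tuples 2
            \<longrightarrow> \<rho> a \<in> IRel 2 \<and> \<rho> b \<in> IRel 2
              \<and> [double 1 2, single 2] \<in> sem 2 \<eta> \<rho> (lhs17 a b)
              \<and> [double 1 2, single 2] \<notin> sem 2 \<eta> \<rho> (rhs17 a b))"
proof (intro conjI allI impI)
  fix \<eta> :: "nat \<Rightarrow> int" and \<rho> :: "'a \<Rightarrow> heap list set"
  assume "\<forall>c. \<rho> c \<in> IRel 1"
  then show "sem 1 \<eta> \<rho> (lhs17 a b) \<subseteq> sem 1 \<eta> \<rho> (rhs17 a b)" by (rule unary)
next
  fix \<eta> :: "nat \<Rightarrow> int" and \<rho> :: "'a \<Rightarrow> heap list set"
  assume ra: "\<rho> a = upclose 2 {[single 1, Map.empty]} \<union> upclose 2 {[single 2, single 2]}"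
    and rb: "\<rho> b = tuples 2"
  show "\<rho> a \<in> IRel 2" unfolding ra by (intro IRel_Un upclose_IRel)
  show "\<rho> b \<in> IRel 2" unfolding rb by (rule tuples_IRel)
  show "[double 1 2, single 2] \<in> sem 2 \<eta> \<rho> (lhs17 a b)" using binary(1)[where \<rho>=\<rho> and a=a and b=b and \<eta>=\<eta>, OF ra rb] .
  show "[double 1 2, single 2] \<notin> sem 2 \<eta> \<rho> (rhs17 a b)" using binary(2)[where \<rho>=\<rho> and a=a and b=b and \<eta>=\<eta>, OF ra rb] .
qed

end
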